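(* Let $Q$ be an admissible orientation of $\tilde A_n$ and let $I$ be a non-zero linearized semigroup ideal of $\Bbbk Q$. Then $I$ is indecomposable (as an ideal, i.e. it is not a direct sum of two non-zero ideals) if and only if the graph $\Gamma_I$ is connected.
   Context: $\Bbbk$ is an algebraically closed field. An admissible orientation of $\tilde A_n$ is a finite quiver $Q$ with $n$ vertices whose underlying undirected graph is a cycle, having no oriented cycle and at least one source; let $k\ge1$ be the number of sources (= number of sinks). Paths include trivial paths $\varepsilon_x$; products of paths in $\Bbbk Q$ are concatenations when defined and $0$ otherwise. $\omega\le_J\upsilon$ means $\upsilon=\alpha\omega\beta$ for paths $\alpha,\beta$; maximal paths are the $\le_J$-maximal paths (they are the $2k$ paths from a source to an adjacent sink). A linearized semigroup ideal is an ideal spanned by a set $X$ of paths such that $\alpha\omega\beta\in X$ whenever $\omega\in X$ and $\alpha\omega\beta$ is a defined path. The graph $\Gamma$ has the maximal paths as vertices and the sources and sinks of $Q$ as edges, the edge $x$ joining the two maximal paths having $x$ as an endpoint. For a linearized semigroup ideal $I$, $\Gamma_I$ is the subgraph with vertex set the maximal paths lying in $I$ and edge set the sources/sinks $x$ with $\varepsilon_x\in I$. *)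

theory Defs
  imports "HOL-Computational_Algebra.Polynomial"
begin

text \<open>Vertices are 0..n-1; arrow i (for i < n) joins vertex i and vertex (i+1) mod n.  Every quiver whose underlying graph is a cycle with
  n vertices is isomorphic to one of these.\<close>

definition arr_src :: "nat \<Rightarrow> (nat \<Rightarrow> bool) \<Rightarrow> nat \<Rightarrow> nat" where
  "arr_src n dir i = (if dir i then i else Suc i mod n)"

definition arr_tgt :: "nat \<Rightarrow> (nat \<Rightarrow> bool) \<Rightarrow> nat \<Rightarrow> nat" where
  "arr_tgt n dir i = (if dir i then Suc i mod n else i)"

text \<open>A path is a pair (start vertex, list of arrows); (x, []) is the trivial path at x.\<close>
type_synonym qpath = "nat \<times> nat list"

fun pvalid :: "nat \<Rightarrow> (nat \<Rightarrow> bool) \<Rightarrow> nat \<Rightarrow> nat list \<Rightarrow> bool" where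
  "pvalid n dir x [] = (x < n)"
| "pvalid n dir x (a # as) = (a < n \<and> x = arr_src n dir a \<and> pvalid n dir (arr_tgt n dir a) as)"

fun pend :: "nat \<Rightarrow> (nat \<Rightarrow> bool) \<Rightarrow> nat \<Rightarrow> nat list \<Rightarrow> nat" where
  "pend n dir x [] = x"
| "pend n dir x (a # as) = pend n dir (arr_tgt n dir a) as"

definition is_path :: "nat \<Rightarrow> (nat \<Rightarrow> bool) \<Rightarrow> qpath \<Rightarrow> bool" where
  "is_path n dir p = pvalid n dir (fst p) (snd p)"

definition path_start :: "qpath \<Rightarrow> nat" where
  "path_start p = fst p"

definition path_end :: "nat \<Rightarrow> (nat \<Rightarrow> bool) \<Rightarrow> qpath \<Rightarrow> nat" where
  "path_end n dir p = pend n dir (fst p) (snd p)"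

definition composable :: "nat \<Rightarrow> (nat \<Rightarrow> bool) \<Rightarrow> qpath \<Rightarrow> qpath \<Rightarrow> bool" where
  "composable n dir p q = (path_end n dir p = path_start q)"

definition pconcat :: "qpath \<Rightarrow> qpath \<Rightarrow> qpath" where
  "pconcat p q = (fst p, snd p @ snd q)"

definition is_source :: "nat \<Rightarrow> (nat \<Rightarrow> bool) \<Rightarrow> nat \<Rightarrow> bool" where
  "is_source n dir x = (x < n \<and> (\<forall>i<n. arr_tgt n dir i \<noteq> x))"

definition is_sink :: "nat \<Rightarrow> (nat \<Rightarrow> bool) \<Rightarrow> nat \<Rightarrow> bool" where
  "is_sink n dir x = (x < n \<and> (\<forall>i<n. arr_src n dir i \<noteq> x))"

definition admissible :: "nat \<Rightarrow> (nat \<Rightarrow> bool) \<Rightarrow> bool" where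
  "admissible n dir =
     ((\<forall>p. is_path n dir p \<and> snd p \<noteq> [] \<longrightarrow> path_end n dir p \<noteq> path_start p)
      \<and> (\<exists>x. is_source n dir x))"

definition le_J :: "nat \<Rightarrow> (nat \<Rightarrow> bool) \<Rightarrow> qpath \<Rightarrow> qpath \<Rightarrow> bool" where
  "le_J n dir w u = (\<exists>\<alpha> \<beta>. is_path n dir \<alpha> \<and> is_path n dir \<beta> \<and>
      composable n dir \<alpha> w \<and> composable n dir w \<beta> \<and> u = pconcat (pconcat \<alpha> w) \<beta>)"

definition maximal_path :: "nat \<Rightarrow> (nat \<Rightarrow> bool) \<Rightarrow> qpath \<Rightarrow> bool" where
  "maximal_path n dir w = (is_path n dir w \<and>
      (\<forall>u. is_path n dir u \<and> le_J n dir w u \<longrightarrow> u = w))"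

text \<open>Elements of kQ: k-linear combinations of paths, i.e. coefficient functions
  supported on paths (the set of paths is finite for acyclic Q).\<close>
definition pathalg :: "nat \<Rightarrow> (nat \<Rightarrow> bool) \<Rightarrow> (qpath \<Rightarrow> 'k::field) set" where
  "pathalg n dir = {f. \<forall>p. f p \<noteq> 0 \<longrightarrow> is_path n dir p}"

definition pmult :: "nat \<Rightarrow> (nat \<Rightarrow> bool) \<Rightarrow> (qpath \<Rightarrow> 'k::field) \<Rightarrow> (qpath \<Rightarrow> 'k) \<Rightarrow> (qpath \<Rightarrow> 'k)" where
  "pmult n dir f g = (\<lambda>r. \<Sum>(p, q) \<in> {(p, q). is_path n dir p \<and> is_path n dir q \<and>
       composable n dir p q \<and> pconcat p q = r}. f p * g q)"

definition path_elem :: "qpath \<Rightarrow> (qpath \<Rightarrow> 'k::field)" where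
  "path_elem w = (\<lambda>r. if r = w then 1 else 0)"

definition is_ideal :: "nat \<Rightarrow> (nat \<Rightarrow> bool) \<Rightarrow> (qpath \<Rightarrow> 'k::field) set \<Rightarrow> bool" where
  "is_ideal n dir I = (I \<subseteq> pathalg n dir \<and> (\<lambda>_. 0) \<in> I \<and>
      (\<forall>f\<in>I. \<forall>g\<in>I. (\<lambda>r. f r + g r) \<in> I) \<and>
      (\<forall>c. \<forall>f\<in>I. (\<lambda>r. c * f r) \<in> I) \<and>
      (\<forall>f\<in>I. \<forall>a\<in>pathalg n dir. pmult n dir a f \<in> I \<and> pmult n dir f a \<in> I))"

text \<open>Linearized semigroup ideal: the span of a set X of paths closed under
  alpha omega beta; the span of X is the set of elements supported on X.\<close>
definition lin_semigroup_ideal :: "nat \<Rightarrow> (nat \<Rightarrow> bool) \<Rightarrow> (qpath \<Rightarrow> 'k::field) set \<Rightarrow> bool" where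
  "lin_semigroup_ideal n dir I = (\<exists>X. X \<subseteq> {p. is_path n dir p} \<and>
      (\<forall>w\<in>X. \<forall>\<alpha> \<beta>. is_path n dir \<alpha> \<and> is_path n dir \<beta> \<and> composable n dir \<alpha> w \<and>
          composable n dir w \<beta> \<longrightarrow> pconcat (pconcat \<alpha> w) \<beta> \<in> X) \<and>
      I = {f \<in> pathalg n dir. \<forall>p. f p \<noteq> 0 \<longrightarrow> p \<in> X})"

definition decomposable_ideal :: "nat \<Rightarrow> (nat \<Rightarrow> bool) \<Rightarrow> (qpath \<Rightarrow> 'k::field) set \<Rightarrow> bool" where
  "decomposable_ideal n dir I = (\<exists>J K. is_ideal n dir J \<and> is_ideal n dir K \<and>
      J \<noteq> {\<lambda>_. 0} \<and> K \<noteq> {\<lambda>_. 0} \<and> J \<inter> K = {\<lambda>_. 0} \<and>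
      I = {(\<lambda>r. j r + k r) | j k. j \<in> J \<and> k \<in> K})"

definition indecomposable_ideal :: "nat \<Rightarrow> (nat \<Rightarrow> bool) \<Rightarrow> (qpath \<Rightarrow> 'k::field) set \<Rightarrow> bool" where
  "indecomposable_ideal n dir I = (I \<noteq> {\<lambda>_. 0} \<and> \<not> decomposable_ideal n dir I)"

definition gamma_vertices :: "nat \<Rightarrow> (nat \<Rightarrow> bool) \<Rightarrow> (qpath \<Rightarrow> 'k::field) set \<Rightarrow> qpath set" where
  "gamma_vertices n dir I = {w. maximal_path n dir w \<and> path_elem w \<in> I}"

definition gamma_edges :: "nat \<Rightarrow> (nat \<Rightarrow> bool) \<Rightarrow> (qpath \<Rightarrow> 'k::field) set \<Rightarrow> nat set" where
  "gamma_edges n dir I = {x. (is_source n dir x \<or> is_sink n dir x) \<and> path_elem (x, []) \<in> I}"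

definition is_endpoint :: "nat \<Rightarrow> (nat \<Rightarrow> bool) \<Rightarrow> nat \<Rightarrow> qpath \<Rightarrow> bool" where
  "is_endpoint n dir x w = (x = path_start w \<or> x = path_end n dir w)"

definition gamma_adj :: "nat \<Rightarrow> (nat \<Rightarrow> bool) \<Rightarrow> (qpath \<Rightarrow> 'k::field) set \<Rightarrow> (qpath \<times> qpath) set" where
  "gamma_adj n dir I = {(w, u). w \<in> gamma_vertices n dir I \<and> u \<in> gamma_vertices n dir I \<and>
      (\<exists>x \<in> gamma_edges n dir I. is_endpoint n dir x w \<and> is_endpoint n dir x u)}"

definition gamma_connected :: "nat \<Rightarrow> (nat \<Rightarrow> bool) \<Rightarrow> (qpath \<Rightarrow> 'k::field) set \<Rightarrow> bool" where
  "gamma_connected n dir I = (gamma_vertices n dir I \<noteq> {} \<and>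
      (\<forall>w \<in> gamma_vertices n dir I. \<forall>u \<in> gamma_vertices n dir I. (w, u) \<in> (gamma_adj n dir I)\<^sup>*))"

end

theory Submission
  imports Defs
begin


lemma pvalid_lt: "pvalid n dir x L \<Longrightarrow> x < n"
  by (induction L arbitrary: x) (auto simp: arr_src_def split: if_splits)

lemma src_lt: "a < n \<Longrightarrow> arr_src n dir a < n"
  by (auto simp: arr_src_def)
lemma tgt_lt: "a < n \<Longrightarrow> arr_tgt n dir a < n"
  by (auto simp: arr_tgt_def)

lemma pvalid_append: "pvalid n dir x (A @ B) \<longleftrightarrow> pvalid n dir x A \<and> pvalid n dir (pend n dir x A) B"
  by (induction A arbitrary: x) (auto dest: pvalid_lt)

lemma pend_append: "pend n dir x (A @ B) = pend n dir (pend n dir x A) B"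
  by (induction A arbitrary: x) auto

lemma pend_lt: "pvalid n dir x A \<Longrightarrow> pend n dir x A < n"
  by (induction A arbitrary: x) auto

lemma pvalid_snoc: "pvalid n dir x (A @ [a]) \<longleftrightarrow> pvalid n dir x A \<and> a < n \<and> pend n dir x A = arr_src n dir a"
  by (auto simp: pvalid_append tgt_lt)

lemma pend_snoc: "pend n dir x (A @ [a]) = arr_tgt n dir a"
  by (simp add: pend_append)

lemma path_concat:
  "is_path n dir p \<Longrightarrow> is_path n dir q \<Longrightarrow> composable n dir p q \<Longrightarrow> is_path n dir (pconcat p q)"
  by (auto simp: is_path_def pconcat_def composable_def path_end_def path_start_def pvalid_append)

lemma end_concat:
  "composable n dir p q \<Longrightarrow> path_end n dir (pconcat p q) = path_end n dir q"
  by (auto simp: pconcat_def composable_def path_end_def path_start_def pend_append)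

lemma no_cycle:
  "admissible n dir \<Longrightarrow> is_path n dir q \<Longrightarrow> path_end n dir q = fst q \<Longrightarrow> snd q = []"
  unfolding admissible_def path_start_def by (metis prod.collapse)

lemma len_bound:
  assumes adm: "admissible n dir" and p: "pvalid n dir x L"
  shows "length L < n"
proof (rule ccontr)
  assume "\<not> length L < n"
  hence len: "n \<le> length L" by simp
  define f where "f i = pend n dir x (take i L)" for i
  have fr: "f ` {..n} \<subseteq> {..<n}"
  proof
    fix y assume "y \<in> f ` {..n}"
    then obtain i where "y = f i" by auto
    have "pvalid n dir x (take i L)" using p pvalid_append[of n dir x "take i L" "drop i L"] by simp
    thus "y \<in> {..<n}" using \<open>y = f i\<close> f_def pend_lt by auto
  qed
  have "\<not> inj_on f {..n}"
  proof
    assume "inj_on f {..n}"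
    hence "card (f ` {..n}) = Suc n" by (simp add: card_image)
    moreover have "card (f ` {..n}) \<le> n" using card_mono[OF _ fr] by simp
    ultimately show False by simp
  qed
  then obtain i j where ij: "i \<le> n" "j \<le> n" "i \<noteq> j" "f i = f j"
    unfolding inj_on_def by auto
  obtain i j where ij: "i < j" "j \<le> n" "f i = f j"
    using ij by (metis linorder_neqE_nat order.strict_trans1 less_imp_le)
  have tj: "take j L = take i L @ drop i (take j L)"
    using ij by (metis append_take_drop_id min.absorb1 less_imp_le take_take)
  have "pvalid n dir x (take j L)" using p pvalid_append[of n dir x "take j L" "drop j L"] by simp
  hence v: "pvalid n dir (f i) (drop i (take j L))" using tj pvalid_append f_def by metis
  have e: "pend n dir (f i) (drop i (take j L)) = f i" using tj pend_append f_def ij by metis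
  have "drop i (take j L) \<noteq> []" using ij len by simp
  thus False using no_cycle[OF adm, of "(f i, drop i (take j L))"] v e
    by (simp add: is_path_def path_end_def)
qed

lemma trivial_path: "x < n \<Longrightarrow> is_path n dir (x, [])"
  by (simp add: is_path_def)

lemma path_fst_lt: "is_path n dir p \<Longrightarrow> fst p < n"
  by (auto simp: is_path_def dest: pvalid_lt)

lemma le_J_refl: "is_path n dir p \<Longrightarrow> le_J n dir p p"
  unfolding le_J_def
  apply (rule exI[of _ "(fst p, [])"], rule exI[of _ "(path_end n dir p, [])"])
  apply (auto simp: is_path_def composable_def path_end_def path_start_def pconcat_def pend_lt dest: pvalid_lt)
  done

lemma comp_concat_right: "composable n dir a p \<Longrightarrow> composable n dir p b \<Longrightarrow> composable n dir (pconcat a p) b"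
  by (simp add: composable_def end_concat)

lemma le_J_path: "is_path n dir p \<Longrightarrow> le_J n dir p u \<Longrightarrow> is_path n dir u"
  unfolding le_J_def by (metis path_concat comp_concat_right)

lemma le_J_trans: assumes "is_path n dir p" "le_J n dir p w" "le_J n dir w u" shows "le_J n dir p u"
proof -
  obtain a1 b1 where 1: "is_path n dir a1" "is_path n dir b1" "composable n dir a1 p" "composable n dir p b1"
     "w = pconcat (pconcat a1 p) b1" using assms(2) unfolding le_J_def by blast
  obtain a2 b2 where 2: "is_path n dir a2" "is_path n dir b2" "composable n dir a2 w" "composable n dir w b2"
     "u = pconcat (pconcat a2 w) b2" using assms(3) unfolding le_J_def by blast
  have c1: "composable n dir a2 a1" using 1 2 by (simp add: composable_def pconcat_def path_start_def)
  have c2: "composable n dir b1 b2" 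
  proof -
    have "path_end n dir w = path_end n dir b1" using 1 comp_concat_right end_concat by metis
    thus ?thesis using 2 by (simp add: composable_def)
  qed
  show ?thesis unfolding le_J_def
    apply (rule exI[of _ "pconcat a2 a1"], rule exI[of _ "pconcat b1 b2"])
    apply (intro conjI)
    using 1 2 c1 c2 path_concat apply blast
    using 1 2 c1 c2 path_concat apply blast
    using 1 c1 end_concat apply (simp add: composable_def)
    using 1 c2 apply (simp add: composable_def pconcat_def path_start_def)
    using 1 2 apply (simp add: pconcat_def)
    done
qed

lemma le_J_len: "le_J n dir p u \<Longrightarrow> length (snd p) \<le> length (snd u)"
  unfolding le_J_def by (auto simp: pconcat_def)

lemma le_J_eq_len: assumes "le_J n dir p u" "length (snd u) \<le> length (snd p)" shows "u = p"
proof -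
  obtain a b where ab: "composable n dir a p" "u = pconcat (pconcat a p) b"
    using assms(1) unfolding le_J_def by blast
  have "snd a = []" "snd b = []" using assms(2) ab by (auto simp: pconcat_def)
  hence "path_end n dir a = fst a" by (simp add: path_end_def)
  hence "fst a = fst p" using ab by (simp add: composable_def path_start_def)
  thus ?thesis using ab \<open>snd a = []\<close> \<open>snd b = []\<close> by (simp add: pconcat_def prod_eq_iff)
qed

lemma max_above:
  assumes adm: "admissible n dir" and p: "is_path n dir p"
  shows "\<exists>v. maximal_path n dir v \<and> le_J n dir p v"
proof -
  define P where "P u = (is_path n dir u \<and> le_J n dir p u)" for u
  have "P p" unfolding P_def using p le_J_refl by blast
  moreover have "\<forall>y. P y \<longrightarrow> length (snd y) < n"
  proof (intro allI impI)
    fix y assume "P y"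
    hence "is_path n dir y" unfolding P_def by blast
    thus "length (snd y) < n" using len_bound[OF adm, of "fst y" "snd y"] by (simp add: is_path_def)
  qed
  ultimately obtain u where m: "P u" "\<forall>y. P y \<longrightarrow> length (snd y) \<le> length (snd u)"
    using ex_has_greatest_nat[of P p "\<lambda>u. length (snd u)" n] by blast
  have u: "is_path n dir u" "le_J n dir p u" using m(1) unfolding P_def by blast+
  have "maximal_path n dir u" unfolding maximal_path_def
  proof (intro conjI allI impI)
    fix u' assume a: "is_path n dir u' \<and> le_J n dir u u'"
    hence "le_J n dir p u'" using le_J_trans[OF p u(2)] by blast
    hence "P u'" unfolding P_def using a by blast
    hence "length (snd u') \<le> length (snd u)" using m(2) by blast
    thus "u' = u" using le_J_eq_len a by blast
  qed (fact u)
  thus ?thesis using u by blast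
qed

lemma maximal_source:
  assumes "maximal_path n dir v" shows "is_source n dir (fst v)"
proof (rule ccontr)
  assume ns: "\<not> is_source n dir (fst v)"
  have vp: "is_path n dir v" using assms maximal_path_def by blast
  hence "fst v < n" by (rule path_fst_lt)
  then obtain i where i: "i < n" "arr_tgt n dir i = fst v" using ns is_source_def by blast
  define a where "a = (arr_src n dir i, [i])"
  have ap: "is_path n dir a" using i \<open>fst v < n\<close> by (simp add: a_def is_path_def src_lt tgt_lt)
  have "path_end n dir v < n" using vp by (simp add: is_path_def path_end_def pend_lt)
  hence "le_J n dir v (pconcat (pconcat a v) (path_end n dir v, []))"
    unfolding le_J_def
    apply (intro exI conjI)
       apply (rule ap)
      apply (erule trivial_path)
    using i apply (simp add: a_def composable_def path_end_def path_start_def)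
    apply (simp add: composable_def path_start_def)
    by (rule refl)
  moreover have "is_path n dir (pconcat (pconcat a v) (path_end n dir v, []))"
    using le_J_path[OF vp] calculation by blast
  ultimately have "pconcat (pconcat a v) (path_end n dir v, []) = v"
    using assms maximal_path_def by blast
  hence "snd (pconcat (pconcat a v) (path_end n dir v, [])) = snd v" by simp
  thus False by (simp add: pconcat_def a_def)
qed

lemma maximal_sink:
  assumes "maximal_path n dir v" shows "is_sink n dir (path_end n dir v)"
proof (rule ccontr)
  assume ns: "\<not> is_sink n dir (path_end n dir v)"
  have vp: "is_path n dir v" using assms maximal_path_def by blast
  hence "path_end n dir v < n" by (auto simp: is_path_def path_end_def pend_lt)
  then obtain i where i: "i < n" "arr_src n dir i = path_end n dir v" using ns is_sink_def by blast
  define b where "b = (arr_src n dir i, [i])"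
  have bp: "is_path n dir b" using i by (simp add: b_def is_path_def src_lt tgt_lt)
  have "le_J n dir v (pconcat (pconcat (fst v, []) v) b)"
    unfolding le_J_def
    apply (intro exI conjI)
       apply (rule trivial_path, rule path_fst_lt, rule vp)
      apply (rule bp)
     apply (simp add: composable_def path_end_def path_start_def)
    using i apply (simp add: b_def composable_def path_start_def)
    by (rule refl)
  moreover have "is_path n dir (pconcat (pconcat (fst v, []) v) b)"
    using le_J_path[OF vp] calculation by blast
  ultimately have "pconcat (pconcat (fst v, []) v) b = v"
    using assms maximal_path_def by blast
  hence "snd (pconcat (pconcat (fst v, []) v) b) = snd v" by simp
  thus False by (simp add: pconcat_def b_def)
qed



lemma loopfree: "admissible n dir \<Longrightarrow> a < n \<Longrightarrow> arr_src n dir a \<noteq> arr_tgt n dir a"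
  using no_cycle[of n dir "(arr_src n dir a, [a])"]
  by (auto simp: is_path_def path_end_def src_lt tgt_lt)

lemma incident: "a < n \<Longrightarrow> arr_src n dir a = y \<or> arr_tgt n dir a = y \<Longrightarrow> a = y \<or> Suc a mod n = y"
  by (auto simp: arr_src_def arr_tgt_def split: if_splits)

lemma suc_mod_inj: "a < n \<Longrightarrow> b < n \<Longrightarrow> Suc a mod n = Suc b mod n \<Longrightarrow> a = b"
proof -
  assume a: "a < n" "b < n" "Suc a mod n = Suc b mod n"
  consider "Suc a < n" "Suc b < n" | "Suc a = n" "Suc b < n" | "Suc a < n" "Suc b = n" | "Suc a = n" "Suc b = n"
    using a by linarith
  thus ?thesis using a by cases auto
qed

lemma three_incident:
  assumes "a < n" "b < n" "c < n" "a \<noteq> b" "a \<noteq> c" "b \<noteq> c"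
    "arr_src n dir a = y \<or> arr_tgt n dir a = y"
    "arr_src n dir b = y \<or> arr_tgt n dir b = y"
    "arr_src n dir c = y \<or> arr_tgt n dir c = y"
  shows False
proof -
  have A: "a = y \<or> Suc a mod n = y" by (rule incident[OF assms(1,7)])
  have B: "b = y \<or> Suc b mod n = y" by (rule incident[OF assms(2,8)])
  have C: "c = y \<or> Suc c mod n = y" by (rule incident[OF assms(3,9)])
  show False
  proof (cases "a = y")
    case True
    hence "Suc b mod n = y" "Suc c mod n = y" using B C assms(4,5) by auto
    thus False using suc_mod_inj[OF assms(2,3)] assms(6) by simp
  next
    case False
    hence sa: "Suc a mod n = y" using A by simp
    show False
    proof (cases "b = y")
      case True
      hence "Suc c mod n = y" using C assms(6) by auto
      thus False using sa suc_mod_inj[OF assms(1,3)] assms(5) by simp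
    next
      case False
      hence "Suc b mod n = y" using B by simp
      thus False using sa suc_mod_inj[OF assms(1,2)] assms(4) by simp
    qed
  qed
qed

lemma out_unique:
  assumes adm: "admissible n dir" and "c < n" "arr_tgt n dir c = y"
    "a < n" "b < n" "arr_src n dir a = y" "arr_src n dir b = y"
  shows "a = b"
proof (rule ccontr)
  assume "a \<noteq> b"
  moreover have "c \<noteq> a" using loopfree[OF adm, of a] assms by auto
  moreover have "c \<noteq> b" using loopfree[OF adm, of b] assms by auto
  ultimately show False using three_incident[of a n b c dir y] assms by auto
qed

lemma in_unique:
  assumes adm: "admissible n dir" and "c < n" "arr_src n dir c = y"
    "a < n" "b < n" "arr_tgt n dir a = y" "arr_tgt n dir b = y"
  shows "a = b"
proof (rule ccontr)
  assume "a \<noteq> b"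
  moreover have "c \<noteq> a" using loopfree[OF adm, of a] assms by auto
  moreover have "c \<noteq> b" using loopfree[OF adm, of b] assms by auto
  ultimately show False using three_incident[of a n b c dir y] assms by auto
qed

lemma fwd_det:
  assumes adm: "admissible n dir"
  shows "pvalid n dir y B1 \<Longrightarrow> pvalid n dir y B2 \<Longrightarrow> is_sink n dir (pend n dir y B1) \<Longrightarrow>
    is_sink n dir (pend n dir y B2) \<Longrightarrow>
    (B1 \<noteq> [] \<and> B2 \<noteq> [] \<longrightarrow> hd B1 = hd B2 \<or> (\<exists>c<n. arr_tgt n dir c = y)) \<Longrightarrow> B1 = B2"
proof (induction B1 arbitrary: y B2)
  case Nil
  show ?case
  proof (cases B2)
    case (Cons b B2')
    hence "b < n" "arr_src n dir b = y" using Nil.prems(2) by auto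
    moreover have "is_sink n dir y" using Nil.prems(3) by simp
    ultimately show ?thesis unfolding is_sink_def by blast
  qed simp
next
  case (Cons a B1)
  have a: "a < n" "y = arr_src n dir a" "pvalid n dir (arr_tgt n dir a) B1" using Cons.prems(1) by auto
  obtain b B2' where B2: "B2 = b # B2'"
  proof (cases B2)
    case Nil
    hence "is_sink n dir y" using Cons.prems(4) by simp
    thus ?thesis using a unfolding is_sink_def by blast
  qed
  have b: "b < n" "y = arr_src n dir b" "pvalid n dir (arr_tgt n dir b) B2'" using Cons.prems(2) B2 by auto
  have ab: "a = b"
  proof -
    have "a = b \<or> (\<exists>c<n. arr_tgt n dir c = y)" using Cons.prems(5) B2 by simp
    thus ?thesis
    proof
      assume "\<exists>c<n. arr_tgt n dir c = y"
      then obtain c where "c < n" "arr_tgt n dir c = y" by blast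
      thus "a = b" using out_unique[OF adm \<open>c < n\<close> \<open>arr_tgt n dir c = y\<close> a(1) b(1)] a(2) b(2) by simp
    qed
  qed
  have "B1 = B2'"
  proof (rule Cons.IH[of "arr_tgt n dir a"])
    show "pvalid n dir (arr_tgt n dir a) B1" by (rule a(3))
    show "pvalid n dir (arr_tgt n dir a) B2'" using b(3) ab by simp
    show "is_sink n dir (pend n dir (arr_tgt n dir a) B1)" using Cons.prems(3) by simp
    show "is_sink n dir (pend n dir (arr_tgt n dir a) B2')" using Cons.prems(4) B2 ab by simp
    show "B1 \<noteq> [] \<and> B2' \<noteq> [] \<longrightarrow> hd B1 = hd B2' \<or> (\<exists>c<n. arr_tgt n dir c = arr_tgt n dir a)"
      using a(1) by blast
  qed
  thus ?case using B2 ab by simp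
qed

lemma bwd_det:
  assumes adm: "admissible n dir"
  shows "pvalid n dir s1 A1 \<Longrightarrow> pvalid n dir s2 A2 \<Longrightarrow> pend n dir s1 A1 = y \<Longrightarrow> pend n dir s2 A2 = y \<Longrightarrow>
    is_source n dir s1 \<Longrightarrow> is_source n dir s2 \<Longrightarrow>
    (A1 \<noteq> [] \<and> A2 \<noteq> [] \<longrightarrow> last A1 = last A2 \<or> (\<exists>c<n. arr_src n dir c = y)) \<Longrightarrow> s1 = s2 \<and> A1 = A2"
proof (induction A1 arbitrary: y A2 rule: rev_induct)
  case Nil
  show ?case
  proof (cases A2 rule: rev_cases)
    case Nil
    then show ?thesis using Nil.prems(3,4) by simp
  next
    case (snoc A2' b)
    hence "b < n" "arr_tgt n dir b = y" using Nil.prems(2,4) by (auto simp: pvalid_snoc pend_snoc)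
    moreover have "is_source n dir y" using Nil.prems(3,5) by simp
    ultimately show ?thesis unfolding is_source_def by blast
  qed
next
  case (snoc a A1)
  have a: "a < n" "y = arr_tgt n dir a" "pvalid n dir s1 A1" "pend n dir s1 A1 = arr_src n dir a"
    using snoc.prems(1,3) by (auto simp: pvalid_snoc pend_snoc)
  obtain A2' b where A2: "A2 = A2' @ [b]"
  proof (cases A2 rule: rev_cases)
    case Nil
    hence "is_source n dir y" using snoc.prems(4,6) by simp
    thus ?thesis using a unfolding is_source_def by blast
  qed
  have b: "b < n" "y = arr_tgt n dir b" "pvalid n dir s2 A2'" "pend n dir s2 A2' = arr_src n dir b"
    using snoc.prems(2,4) A2 by (auto simp: pvalid_snoc pend_snoc)
  have ab: "a = b"
  proof -
    have "a = b \<or> (\<exists>c<n. arr_src n dir c = y)" using snoc.prems(7) A2 by simp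
    thus ?thesis
    proof
      assume "\<exists>c<n. arr_src n dir c = y"
      then obtain c where "c < n" "arr_src n dir c = y" by blast
      thus "a = b" using in_unique[OF adm \<open>c < n\<close> \<open>arr_src n dir c = y\<close> a(1) b(1)] a(2) b(2) by simp
    qed
  qed
  have "s1 = s2 \<and> A1 = A2'"
  proof (rule snoc.IH[of A2' "arr_src n dir a"])
    show "pvalid n dir s1 A1" by (rule a(3))
    show "pvalid n dir s2 A2'" by (rule b(3))
    show "pend n dir s1 A1 = arr_src n dir a" by (rule a(4))
    show "pend n dir s2 A2' = arr_src n dir a" using b(4) ab by simp
    show "is_source n dir s1" "is_source n dir s2" using snoc.prems(5,6) by auto
    show "A1 \<noteq> [] \<and> A2' \<noteq> [] \<longrightarrow> last A1 = last A2' \<or> (\<exists>c<n. arr_src n dir c = arr_src n dir a)"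
      using a(1) by blast
  qed
  thus ?case using A2 ab by simp
qed



lemma le_J_decomp:
  assumes "le_J n dir p v" "is_path n dir v"
  obtains s A B where "v = (s, A @ snd p @ B)" "pvalid n dir s A" "pend n dir s A = fst p"
    "pvalid n dir (fst p) (snd p @ B)" "pend n dir (fst p) (snd p @ B) = path_end n dir v"
proof -
  obtain a b where ab: "composable n dir a p" "v = pconcat (pconcat a p) b"
    using assms(1) unfolding le_J_def by blast
  have v: "v = (fst a, snd a @ snd p @ snd b)" using ab by (simp add: pconcat_def)
  have pv: "pvalid n dir (fst a) (snd a @ snd p @ snd b)" using assms(2) v by (simp add: is_path_def)
  have e: "pend n dir (fst a) (snd a) = fst p" using ab(1) by (simp add: composable_def path_end_def path_start_def)
  show ?thesis
  proof (rule that[of "fst a" "snd a" "snd b"])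
    show "v = (fst a, snd a @ snd p @ snd b)" by (rule v)
    show "pvalid n dir (fst a) (snd a)" using pv pvalid_append by blast
    show "pend n dir (fst a) (snd a) = fst p" by (rule e)
    show "pvalid n dir (fst p) (snd p @ snd b)" using pv pvalid_append e by metis
    show "pend n dir (fst p) (snd p @ snd b) = path_end n dir v" using v e pend_append
      by (simp add: path_end_def)
  qed
qed

lemma two_max:
  assumes adm: "admissible n dir" and m1: "maximal_path n dir v1" and m2: "maximal_path n dir v2"
    and l1: "le_J n dir p v1" and l2: "le_J n dir p v2"
  shows "v1 = v2 \<or> (snd p = [] \<and> ((is_source n dir (fst p) \<and> fst v1 = fst p \<and> fst v2 = fst p) \<or>
        (is_sink n dir (fst p) \<and> path_end n dir v1 = fst p \<and> path_end n dir v2 = fst p)))"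
proof -
  have vp1: "is_path n dir v1" and vp2: "is_path n dir v2" using m1 m2 maximal_path_def by blast+
  obtain s1 A1 B1 where 1: "v1 = (s1, A1 @ snd p @ B1)" "pvalid n dir s1 A1" "pend n dir s1 A1 = fst p"
    "pvalid n dir (fst p) (snd p @ B1)" "pend n dir (fst p) (snd p @ B1) = path_end n dir v1"
    using le_J_decomp[OF l1 vp1] by blast
  obtain s2 A2 B2 where 2: "v2 = (s2, A2 @ snd p @ B2)" "pvalid n dir s2 A2" "pend n dir s2 A2 = fst p"
    "pvalid n dir (fst p) (snd p @ B2)" "pend n dir (fst p) (snd p @ B2) = path_end n dir v2"
    using le_J_decomp[OF l2 vp2] by blast
  have so1: "is_source n dir s1" using maximal_source[OF m1] 1(1) by simp
  have so2: "is_source n dir s2" using maximal_source[OF m2] 2(1) by simp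
  have si1: "is_sink n dir (pend n dir (fst p) (snd p @ B1))" using maximal_sink[OF m1] 1(5) by simp
  have si2: "is_sink n dir (pend n dir (fst p) (snd p @ B2))" using maximal_sink[OF m2] 2(5) by simp
  have yn: "fst p < n" using 1(4) pvalid_lt by blast
  have both: "v1 = v2" if F: "snd p @ B1 \<noteq> [] \<and> snd p @ B2 \<noteq> [] \<longrightarrow> hd (snd p @ B1) = hd (snd p @ B2) \<or> (\<exists>c<n. arr_tgt n dir c = fst p)"
    and Bw: "A1 \<noteq> [] \<and> A2 \<noteq> [] \<longrightarrow> last A1 = last A2 \<or> (\<exists>c<n. arr_src n dir c = fst p)"
  proof -
    have "snd p @ B1 = snd p @ B2" using fwd_det[OF adm 1(4) 2(4) si1 si2 F] .
    moreover have "s1 = s2 \<and> A1 = A2" using bwd_det[OF adm 1(2) 2(2) 1(3) 2(3) so1 so2 Bw] .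
    ultimately show ?thesis using 1(1) 2(1) by simp
  qed
  show ?thesis
  proof (cases "snd p = []")
    case False
    then obtain c L where cL: "snd p = c # L" by (cases "snd p") auto
    have "c < n" "arr_src n dir c = fst p" using 1(4) cL by auto
    hence "v1 = v2" using both cL by auto
    thus ?thesis by simp
  next
    case True
    show ?thesis
    proof (cases "is_source n dir (fst p)")
      case src: True
      have "A1 = []"
      proof (rule ccontr)
        assume "A1 \<noteq> []"
        then obtain A' a where "A1 = A' @ [a]" by (cases A1 rule: rev_cases) auto
        hence "a < n" "arr_tgt n dir a = fst p" using 1(2,3) by (auto simp: pvalid_snoc pend_snoc)
        thus False using src unfolding is_source_def by blast
      qed
      moreover have "A2 = []"
      proof (rule ccontr)
        assume "A2 \<noteq> []"
        then obtain A' a where "A2 = A' @ [a]" by (cases A2 rule: rev_cases) auto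
        hence "a < n" "arr_tgt n dir a = fst p" using 2(2,3) by (auto simp: pvalid_snoc pend_snoc)
        thus False using src unfolding is_source_def by blast
      qed
      ultimately show ?thesis using 1(1,3) 2(1,3) True src by simp
    next
      case nsrc: False
      show ?thesis
      proof (cases "is_sink n dir (fst p)")
        case snk: True
        have "B1 = []"
        proof (rule ccontr)
          assume "B1 \<noteq> []"
          then obtain a B' where "B1 = a # B'" by (cases B1) auto
          hence "a < n" "arr_src n dir a = fst p" using 1(4) True by auto
          thus False using snk unfolding is_sink_def by blast
        qed
        moreover have "B2 = []"
        proof (rule ccontr)
          assume "B2 \<noteq> []"
          then obtain a B' where "B2 = a # B'" by (cases B2) auto
          hence "a < n" "arr_src n dir a = fst p" using 2(4) True by auto
          thus False using snk unfolding is_sink_def by blast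
        qed
        ultimately show ?thesis using 1(5) 2(5) True snk by simp
      next
        case nsnk: False
        have "\<exists>c<n. arr_tgt n dir c = fst p" using nsrc yn unfolding is_source_def by blast
        moreover have "\<exists>c<n. arr_src n dir c = fst p" using nsnk yn unfolding is_sink_def by blast
        ultimately have "v1 = v2" using both by blast
        thus ?thesis by simp
      qed
    qed
  qed
qed



abbreviation "Spairs n dir r \<equiv> {(p, q). is_path n dir p \<and> is_path n dir q \<and>
       composable n dir p q \<and> pconcat p q = r}"

lemma finite_Spairs: "finite (Spairs n dir r)"
proof (rule finite_subset)
  show "Spairs n dir r \<subseteq> (\<lambda>i. ((fst r, take i (snd r)), (pend n dir (fst r) (take i (snd r)), drop i (snd r)))) ` {..length (snd r)}"
  proof
    fix z assume "z \<in> Spairs n dir r"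
    then obtain p q where z: "z = (p, q)" "composable n dir p q" "pconcat p q = r" by blast
    have r: "fst r = fst p" "snd r = snd p @ snd q" using z by (auto simp: pconcat_def)
    have "fst q = pend n dir (fst p) (snd p)" using z by (simp add: composable_def path_end_def path_start_def)
    hence "z = ((fst r, take (length (snd p)) (snd r)), (pend n dir (fst r) (take (length (snd p)) (snd r)), drop (length (snd p)) (snd r)))"
      using z r by (simp add: prod_eq_iff)
    moreover have "length (snd p) \<in> {..length (snd r)}" using r by simp
    ultimately show "z \<in> (\<lambda>i. ((fst r, take i (snd r)), (pend n dir (fst r) (take i (snd r)), drop i (snd r)))) ` {..length (snd r)}"
      by blast
  qed
qed simp

lemma pmult_nz:
  assumes "pmult n dir f g r \<noteq> 0"
  shows "\<exists>p q. is_path n dir p \<and> is_path n dir q \<and> composable n dir p q \<and> pconcat p q = r \<and> f p \<noteq> 0 \<and> g q \<noteq> 0"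
proof -
  have "(\<Sum>(p, q) \<in> Spairs n dir r. f p * g q) \<noteq> 0" using assms by (simp add: pmult_def)
  then obtain z where "z \<in> Spairs n dir r" "(case z of (p, q) \<Rightarrow> f p * g q) \<noteq> 0"
    by (rule sum.not_neutral_contains_not_neutral)
  obtain p q where pq: "z = (p, q)" by (cases z)
  have 1: "is_path n dir p \<and> is_path n dir q \<and> composable n dir p q \<and> pconcat p q = r"
    using \<open>z \<in> Spairs n dir r\<close> pq by simp
  have 2: "f p \<noteq> 0 \<and> g q \<noteq> 0" using \<open>(case z of (p, q) \<Rightarrow> f p * g q) \<noteq> 0\<close> pq by simp
  show ?thesis using 1 2 by blast
qed

lemma pmult_single:
  assumes "(c1, c2) \<in> Spairs n dir r"
    and "\<And>p q. (p, q) \<in> Spairs n dir r \<Longrightarrow> (p, q) \<noteq> (c1, c2) \<Longrightarrow> f p * g q = 0"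
  shows "pmult n dir f g r = f c1 * g c2"
proof -
  have "pmult n dir f g r = (\<Sum>z \<in> Spairs n dir r. case z of (p, q) \<Rightarrow> f p * g q)" by (simp add: pmult_def)
  also have "\<dots> = (case (c1, c2) of (p, q) \<Rightarrow> f p * g q) + (\<Sum>z \<in> Spairs n dir r - {(c1, c2)}. case z of (p, q) \<Rightarrow> f p * g q)"
    using sum.remove[OF finite_Spairs assms(1)] by blast
  also have "(\<Sum>z \<in> Spairs n dir r - {(c1, c2)}. case z of (p, q) \<Rightarrow> f p * g q) = 0"
  proof (rule sum.neutral, rule ballI)
    fix z assume "z \<in> Spairs n dir r - {(c1, c2)}"
    moreover obtain p q where pq: "z = (p, q)" by (cases z)
    ultimately have "(p, q) \<in> Spairs n dir r" "(p, q) \<noteq> (c1, c2)" by auto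
    hence "f p * g q = 0" by (rule assms(2))
    thus "(case z of (p, q) \<Rightarrow> f p * g q) = 0" using pq by simp
  qed
  finally show ?thesis by simp
qed

lemma pmult_left:
  assumes "is_path n dir a" "is_path n dir u" "composable n dir a u"
  shows "pmult n dir (path_elem a) f (pconcat a u) = f u"
proof -
  have "pmult n dir (path_elem a) f (pconcat a u) = path_elem a a * f u"
  proof (rule pmult_single)
    show "(a, u) \<in> Spairs n dir (pconcat a u)" using assms by simp
    fix p q assume pq: "(p, q) \<in> Spairs n dir (pconcat a u)" "(p, q) \<noteq> (a, u)"
    show "path_elem a p * f q = 0"
    proof (cases "p = a")
      case True
      hence "snd q = snd u" using pq by (simp add: pconcat_def)
      moreover have "fst q = fst u" using pq True assms(3) by (simp add: composable_def path_start_def)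
      ultimately have "q = u" by (simp add: prod_eq_iff)
      thus ?thesis using pq True by simp
    qed (simp add: path_elem_def)
  qed
  thus ?thesis by (simp add: path_elem_def)
qed

lemma pmult_right:
  assumes "is_path n dir u" "is_path n dir b" "composable n dir u b"
  shows "pmult n dir f (path_elem b) (pconcat u b) = f u"
proof -
  have "pmult n dir f (path_elem b) (pconcat u b) = f u * path_elem b b"
  proof (rule pmult_single)
    show "(u, b) \<in> Spairs n dir (pconcat u b)" using assms by simp
    fix p q assume pq: "(p, q) \<in> Spairs n dir (pconcat u b)" "(p, q) \<noteq> (u, b)"
    show "f p * path_elem b q = 0"
    proof (cases "q = b")
      case True
      hence "snd p = snd u" "fst p = fst u" using pq by (auto simp: pconcat_def)
      hence "p = u" by (simp add: prod_eq_iff)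
      thus ?thesis using pq True by simp
    qed (simp add: path_elem_def)
  qed
  thus ?thesis by (simp add: path_elem_def)
qed

lemma path_elem_alg: "is_path n dir w \<Longrightarrow> path_elem w \<in> pathalg n dir"
  by (simp add: pathalg_def path_elem_def)

lemma path_elem_nz: "path_elem w \<noteq> (\<lambda>_. 0)"
  by (metis path_elem_def one_neq_zero)

lemma concat_triv_left: "pconcat (fst w, []) w = w"
  by (simp add: pconcat_def)

lemma concat_triv_right: "pconcat w (x, []) = w"
  by (simp add: pconcat_def)

lemma unit_left:
  assumes "is_path n dir w"
  shows "pmult n dir (path_elem (fst w, [])) (path_elem w) = (path_elem w :: qpath \<Rightarrow> 'k::field)"
proof
  fix r
  show "pmult n dir (path_elem (fst w, [])) (path_elem w) r = (path_elem w r :: 'k)"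
  proof (cases "r = w")
    case True
    have "pmult n dir (path_elem (fst w, [])) (path_elem w) (pconcat (fst w, []) w) = (path_elem w w :: 'k)"
      apply (rule pmult_left)
      using assms path_fst_lt trivial_path by (auto simp: composable_def path_end_def path_start_def)
    thus ?thesis using True by (simp add: concat_triv_left)
  next
    case False
    show ?thesis
    proof (rule ccontr)
      assume "pmult n dir (path_elem (fst w, [])) (path_elem w) r \<noteq> (path_elem w r :: 'k)"
      moreover have "(path_elem w r :: 'k) = 0" using False by (simp add: path_elem_def)
      ultimately have "pmult n dir (path_elem (fst w, [])) (path_elem w) r \<noteq> (0::'k)" by metis
      then obtain p q where "pconcat p q = r" "(path_elem (fst w, []) p :: 'k) \<noteq> 0" "(path_elem w q :: 'k) \<noteq> 0"
        using pmult_nz by blast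
      hence "r = w" by (simp add: path_elem_def pconcat_def split: if_splits)
      thus False using False by simp
    qed
  qed
qed

lemma unit_right:
  assumes "is_path n dir w"
  shows "pmult n dir (path_elem w) (path_elem (path_end n dir w, [])) = (path_elem w :: qpath \<Rightarrow> 'k::field)"
proof
  fix r
  show "pmult n dir (path_elem w) (path_elem (path_end n dir w, [])) r = (path_elem w r :: 'k)"
  proof (cases "r = w")
    case True
    have "pmult n dir (path_elem w) (path_elem (path_end n dir w, [])) (pconcat w (path_end n dir w, [])) = (path_elem w w :: 'k)"
      apply (rule pmult_right)
      using assms trivial_path by (auto simp: composable_def path_start_def is_path_def path_end_def pend_lt)
    thus ?thesis using True by (simp add: concat_triv_right)
  next
    case False
    show ?thesis
    proof (rule ccontr)
      assume "pmult n dir (path_elem w) (path_elem (path_end n dir w, [])) r \<noteq> (path_elem w r :: 'k)"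
      moreover have "(path_elem w r :: 'k) = 0" using False by (simp add: path_elem_def)
      ultimately have "pmult n dir (path_elem w) (path_elem (path_end n dir w, [])) r \<noteq> (0::'k)" by metis
      then obtain p q where "pconcat p q = r" "(path_elem w p :: 'k) \<noteq> 0" "(path_elem (path_end n dir w, []) q :: 'k) \<noteq> 0"
        using pmult_nz by blast
      hence "r = w" by (simp add: path_elem_def pconcat_def split: if_splits)
      thus False using False by simp
    qed
  qed
qed

lemma corner:
  fixes f :: "qpath \<Rightarrow> 'k::field"
  assumes adm: "admissible n dir" and x: "x < n"
  shows "pmult n dir (pmult n dir (path_elem (x, [])) f) (path_elem (x, [])) = (\<lambda>r. f (x, []) * path_elem (x, []) r)"
proof
  fix r
  have tp: "is_path n dir (x, [])" using x trivial_path by blast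
  have cx: "composable n dir (x, []) (x, [])" by (simp add: composable_def path_end_def path_start_def)
  show "pmult n dir (pmult n dir (path_elem (x, [])) f) (path_elem (x, [])) r = f (x, []) * path_elem (x, []) r"
  proof (cases "r = (x, [])")
    case True
    have "pmult n dir (pmult n dir (path_elem (x, [])) f) (path_elem (x, [])) (pconcat (x, []) (x, []))
        = pmult n dir (path_elem (x, [])) f (x, [])"
      by (rule pmult_right[OF tp tp cx])
    also have "\<dots> = pmult n dir (path_elem (x, [])) f (pconcat (x, []) (x, []))" by (simp add: pconcat_def)
    also have "\<dots> = f (x, [])" by (rule pmult_left[OF tp tp cx])
    finally show ?thesis using True by (simp add: pconcat_def path_elem_def)
  next
    case False
    show ?thesis
    proof (rule ccontr)
      assume "pmult n dir (pmult n dir (path_elem (x, [])) f) (path_elem (x, [])) r \<noteq> f (x, []) * path_elem (x, []) r"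
      moreover have "(path_elem (x, []) r :: 'k) = 0" using False by (simp add: path_elem_def)
      ultimately have "pmult n dir (pmult n dir (path_elem (x, [])) f) (path_elem (x, [])) r \<noteq> 0"
        by simp
      then obtain p q where pq: "is_path n dir p" "composable n dir p q" "pconcat p q = r"
        "pmult n dir (path_elem (x, [])) f p \<noteq> 0" "(path_elem (x, []) q :: 'k) \<noteq> 0"
        using pmult_nz by blast
      have q: "q = (x, [])" using pq(5) by (simp add: path_elem_def split: if_splits)
      obtain p' q' where pq': "is_path n dir q'" "composable n dir p' q'" "pconcat p' q' = p"
        "(path_elem (x, []) p' :: 'k) \<noteq> 0"
        using pmult_nz[OF pq(4)] by blast
      have p': "p' = (x, [])" using pq'(4) by (simp add: path_elem_def split: if_splits)
      have "fst q' = x" using pq'(2) p' by (simp add: composable_def path_end_def path_start_def)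
      have "p = q'" using pq'(3) p' \<open>fst q' = x\<close> by (simp add: pconcat_def prod_eq_iff)
      have "path_end n dir q' = x" using pq(2) q \<open>p = q'\<close> by (simp add: composable_def path_start_def)
      hence "snd q' = []" using no_cycle[OF adm pq'(1)] \<open>fst q' = x\<close> by simp
      hence "r = (x, [])" using pq(3) q \<open>p = q'\<close> \<open>fst q' = x\<close> by (simp add: pconcat_def prod_eq_iff)
      thus False using False by simp
    qed
  qed
qed

definition span_of :: "nat \<Rightarrow> (nat \<Rightarrow> bool) \<Rightarrow> qpath set \<Rightarrow> (qpath \<Rightarrow> 'k::field) set" where
  "span_of n dir Y = {f \<in> pathalg n dir. \<forall>p. f p \<noteq> 0 \<longrightarrow> p \<in> Y}"

definition upclosed :: "nat \<Rightarrow> (nat \<Rightarrow> bool) \<Rightarrow> qpath set \<Rightarrow> bool" where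
  "upclosed n dir Y = (\<forall>w\<in>Y. \<forall>\<alpha> \<beta>. is_path n dir \<alpha> \<and> is_path n dir \<beta> \<and> composable n dir \<alpha> w \<and>
          composable n dir w \<beta> \<longrightarrow> pconcat (pconcat \<alpha> w) \<beta> \<in> Y)"

lemma upclosed_le: "upclosed n dir Y \<Longrightarrow> w \<in> Y \<Longrightarrow> le_J n dir w u \<Longrightarrow> u \<in> Y"
  unfolding upclosed_def le_J_def by blast

lemma span_ideal:
  assumes Yp: "Y \<subseteq> {p. is_path n dir p}" and up: "upclosed n dir Y"
  shows "is_ideal n dir (span_of n dir Y :: (qpath \<Rightarrow> 'k::field) set)"
proof -
  have upc: "\<And>w a b. w \<in> Y \<Longrightarrow> is_path n dir a \<Longrightarrow> is_path n dir b \<Longrightarrow> composable n dir a w \<Longrightarrow>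
     composable n dir w b \<Longrightarrow> pconcat (pconcat a w) b \<in> Y" using up unfolding upclosed_def by blast
  show ?thesis
  unfolding is_ideal_def
proof (intro conjI ballI allI)
  show "span_of n dir Y \<subseteq> pathalg n dir" by (auto simp: span_of_def)
  show "(\<lambda>_. 0) \<in> (span_of n dir Y :: (qpath \<Rightarrow> 'k) set)" by (simp add: span_of_def pathalg_def)
  fix f g :: "qpath \<Rightarrow> 'k" assume f: "f \<in> span_of n dir Y" 
  { assume "g \<in> span_of n dir Y"
    hence g: "\<And>p. g p \<noteq> 0 \<Longrightarrow> is_path n dir p \<and> p \<in> Y" unfolding span_of_def pathalg_def by blast
    have f': "\<And>p. f p \<noteq> 0 \<Longrightarrow> is_path n dir p \<and> p \<in> Y" using f unfolding span_of_def pathalg_def by blast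
    have "\<And>p. f p + g p \<noteq> 0 \<Longrightarrow> is_path n dir p \<and> p \<in> Y"
    proof -
      fix p assume "f p + g p \<noteq> 0"
      hence "f p \<noteq> 0 \<or> g p \<noteq> 0" by auto
      thus "is_path n dir p \<and> p \<in> Y" using f' g by blast
    qed
    thus "(\<lambda>r. f r + g r) \<in> span_of n dir Y" unfolding span_of_def pathalg_def by blast }
  { fix c :: 'k show "(\<lambda>r. c * f r) \<in> span_of n dir Y" using f by (auto simp: span_of_def pathalg_def) }
  fix a :: "qpath \<Rightarrow> 'k" assume a: "a \<in> pathalg n dir"
  show "pmult n dir a f \<in> span_of n dir Y"
    unfolding span_of_def pathalg_def
  proof (intro CollectI conjI allI impI)
    fix r assume "pmult n dir a f r \<noteq> 0"
    then obtain p q where pq: "is_path n dir p" "is_path n dir q" "composable n dir p q" "pconcat p q = r" "f q \<noteq> 0"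
      using pmult_nz by blast
    show "is_path n dir r" using pq path_concat by blast
    have "q \<in> Y" using f pq(5) unfolding span_of_def by blast
    have e: "path_end n dir q < n" using pq(2) by (simp add: is_path_def path_end_def pend_lt)
    have "pconcat (pconcat p q) (path_end n dir q, []) \<in> Y"
      apply (rule upc[OF \<open>q \<in> Y\<close> pq(1) trivial_path[OF e] pq(3)])
      by (simp add: composable_def path_start_def)
    thus "r \<in> Y" using pq(4) concat_triv_right by metis
  qed
  show "pmult n dir f a \<in> span_of n dir Y"
    unfolding span_of_def pathalg_def
  proof (intro CollectI conjI allI impI)
    fix r assume "pmult n dir f a r \<noteq> 0"
    then obtain p q where pq: "is_path n dir p" "is_path n dir q" "composable n dir p q" "pconcat p q = r" "f p \<noteq> 0"
      using pmult_nz by blast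
    show "is_path n dir r" using pq path_concat by blast
    have "p \<in> Y" using f pq(5) unfolding span_of_def by blast
    have "pconcat (pconcat (fst p, []) p) q \<in> Y"
      apply (rule upc[OF \<open>p \<in> Y\<close> trivial_path[OF path_fst_lt[OF pq(1)]] pq(2) _ pq(3)])
      by (simp add: composable_def path_start_def path_end_def)
    thus "r \<in> Y" using pq(4) concat_triv_left by metis
  qed
qed
qed



lemma pe_in_span: "is_path n dir w \<Longrightarrow> (path_elem w \<in> (span_of n dir X :: (qpath \<Rightarrow> 'k::field) set)) \<longleftrightarrow> w \<in> X"
proof
  assume "path_elem w \<in> (span_of n dir X :: (qpath \<Rightarrow> 'k::field) set)"
  moreover have "(path_elem w w :: 'k) \<noteq> 0" by (simp add: path_elem_def)
  ultimately show "w \<in> X" unfolding span_of_def by blast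
next
  assume "is_path n dir w" "w \<in> X"
  thus "path_elem w \<in> (span_of n dir X :: (qpath \<Rightarrow> 'k::field) set)"
    unfolding span_of_def using path_elem_alg[of n dir w] by (simp add: path_elem_def)
qed

lemma vert_iff:
  "w \<in> gamma_vertices n dir (span_of n dir X :: (qpath \<Rightarrow> 'k::field) set) \<longleftrightarrow> maximal_path n dir w \<and> w \<in> X"
  unfolding gamma_vertices_def using pe_in_span maximal_path_def by blast

lemma edge_iff:
  "x \<in> gamma_edges n dir (span_of n dir X :: (qpath \<Rightarrow> 'k::field) set) \<longleftrightarrow> (is_source n dir x \<or> is_sink n dir x) \<and> (x, []) \<in> X"
proof -
  have "is_source n dir x \<or> is_sink n dir x \<Longrightarrow> is_path n dir (x, [])"
    by (auto simp: is_source_def is_sink_def intro: trivial_path)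
  thus ?thesis unfolding gamma_edges_def using pe_in_span by blast
qed

lemma adj_of_two_max:
  assumes adm: "admissible n dir" and pX: "p \<in> X"
    and v: "v \<in> gamma_vertices n dir (span_of n dir X :: (qpath \<Rightarrow> 'k::field) set)"
    and v': "v' \<in> gamma_vertices n dir (span_of n dir X :: (qpath \<Rightarrow> 'k::field) set)"
    and l: "le_J n dir p v" and l': "le_J n dir p v'"
  shows "v = v' \<or> (v, v') \<in> gamma_adj n dir (span_of n dir X :: (qpath \<Rightarrow> 'k::field) set)"
proof -
  have m: "maximal_path n dir v" "maximal_path n dir v'" using v v' vert_iff by blast+
  from two_max[OF adm m l l'] show ?thesis
  proof
    assume h: "snd p = [] \<and> (is_source n dir (fst p) \<and> fst v = fst p \<and> fst v' = fst p \<or>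
        is_sink n dir (fst p) \<and> path_end n dir v = fst p \<and> path_end n dir v' = fst p)"
    hence "p = (fst p, [])" by (simp add: prod_eq_iff)
    hence "(fst p, []) \<in> X" using pX by simp
    hence "fst p \<in> gamma_edges n dir (span_of n dir X :: (qpath \<Rightarrow> 'k::field) set)"
      using h edge_iff by blast
    moreover have "is_endpoint n dir (fst p) v \<and> is_endpoint n dir (fst p) v'"
      using h by (auto simp: is_endpoint_def path_start_def)
    ultimately have "(v, v') \<in> gamma_adj n dir (span_of n dir X :: (qpath \<Rightarrow> 'k::field) set)"
      using v v' unfolding gamma_adj_def by blast
    thus ?thesis by blast
  qed simp
qed



lemma decomp:
  fixes I :: "(qpath \<Rightarrow> 'k::field) set"
  assumes adm: "admissible n dir" and Xp: "X \<subseteq> {p. is_path n dir p}" and up: "upclosed n dir X"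
    and I: "I = span_of n dir X" and nz: "I \<noteq> {\<lambda>_. 0}" and nc: "\<not> gamma_connected n dir I"
  shows "decomposable_ideal n dir I"
proof -
  let ?V = "gamma_vertices n dir I"
  let ?A = "gamma_adj n dir I"
  have V: "\<And>w. w \<in> ?V \<longleftrightarrow> maximal_path n dir w \<and> w \<in> X" using vert_iff I by blast
  have adj2: "\<And>p v v'. p \<in> X \<Longrightarrow> v \<in> ?V \<Longrightarrow> v' \<in> ?V \<Longrightarrow> le_J n dir p v \<Longrightarrow> le_J n dir p v' \<Longrightarrow> v = v' \<or> (v, v') \<in> ?A"
    using adj_of_two_max[OF adm] I by blast
  have adj_sym: "\<And>v v'. (v, v') \<in> ?A \<Longrightarrow> (v', v) \<in> ?A" unfolding gamma_adj_def by blast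
  have above: "\<And>p. p \<in> X \<Longrightarrow> \<exists>v\<in>?V. le_J n dir p v"
  proof -
    fix p assume "p \<in> X"
    hence "is_path n dir p" using Xp by blast
    then obtain v where "maximal_path n dir v" "le_J n dir p v" using max_above[OF adm] by blast
    moreover hence "v \<in> X" using upclosed_le[OF up \<open>p \<in> X\<close>] by blast
    ultimately show "\<exists>v\<in>?V. le_J n dir p v" using V by blast
  qed
  have "?V \<noteq> {}"
  proof -
    obtain f where f: "f \<in> I" "f \<noteq> (\<lambda>_. 0)"
    proof -
      have "(\<lambda>_. 0) \<in> I" using I by (simp add: span_of_def pathalg_def)
      thus ?thesis using nz that by blast
    qed
    then obtain p where "f p \<noteq> 0" by blast
    hence "p \<in> X" using f I unfolding span_of_def by blast
    thus ?thesis using above by blast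
  qed
  then obtain w0 u0 where w0: "w0 \<in> ?V" and u0: "u0 \<in> ?V" and nr: "(w0, u0) \<notin> ?A\<^sup>*"
    using nc unfolding gamma_connected_def by blast
  define C where "C = {v \<in> ?V. (w0, v) \<in> ?A\<^sup>*}"
  define XC where "XC = {p \<in> X. \<exists>v\<in>C. le_J n dir p v}"
  define XD where "XD = {p \<in> X. \<exists>v\<in>?V - C. le_J n dir p v}"
  have Cstep: "\<And>v v'. v \<in> C \<Longrightarrow> (v, v') \<in> ?A \<Longrightarrow> v' \<in> C"
  proof -
    fix v v' assume "v \<in> C" "(v, v') \<in> ?A"
    moreover hence "v' \<in> ?V" unfolding gamma_adj_def by blast
    ultimately show "v' \<in> C" unfolding C_def by (auto intro: rtrancl_into_rtrancl)
  qed
  have disj: "XC \<inter> XD = {}"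
  proof (rule ccontr)
    assume "XC \<inter> XD \<noteq> {}"
    then obtain p v v' where "p \<in> X" "v \<in> C" "le_J n dir p v" "v' \<in> ?V" "v' \<notin> C" "le_J n dir p v'"
      unfolding XC_def XD_def by blast
    moreover hence "v \<in> ?V" unfolding C_def by blast
    ultimately show False using adj2 Cstep by metis
  qed
  have XCup: "upclosed n dir XC" and XDup: "upclosed n dir XD"
  proof -
    have gen: "\<exists>v'\<in>?V. le_J n dir p v' \<and> le_J n dir (pconcat (pconcat a p) b) v' \<and> pconcat (pconcat a p) b \<in> X"
      if "p \<in> X" "is_path n dir a" "is_path n dir b" "composable n dir a p" "composable n dir p b" for p a b
    proof -
      have l: "le_J n dir p (pconcat (pconcat a p) b)" unfolding le_J_def using that by blast
      hence uX: "pconcat (pconcat a p) b \<in> X" using upclosed_le[OF up \<open>p \<in> X\<close>] by blast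
      then obtain v' where "v' \<in> ?V" "le_J n dir (pconcat (pconcat a p) b) v'" using above by blast
      moreover have "is_path n dir p" using Xp that(1) by blast
      ultimately show ?thesis using le_J_trans l uX by blast
    qed
    show "upclosed n dir XC" unfolding upclosed_def
    proof (intro ballI allI impI)
      fix p a b assume p: "p \<in> XC" and ab: "is_path n dir a \<and> is_path n dir b \<and> composable n dir a p \<and> composable n dir p b"
      then obtain v where v: "v \<in> C" "le_J n dir p v" "p \<in> X" unfolding XC_def by blast
      obtain v' where v': "v' \<in> ?V" "le_J n dir p v'" "le_J n dir (pconcat (pconcat a p) b) v'" "pconcat (pconcat a p) b \<in> X"
        using gen[OF v(3)] ab by blast
      have "v \<in> ?V" using v(1) C_def by blast
      hence "v' \<in> C" using adj2[OF v(3) \<open>v \<in> ?V\<close> v'(1) v(2) v'(2)] Cstep v(1) by metis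
      thus "pconcat (pconcat a p) b \<in> XC" using v' XC_def by blast
    qed
    show "upclosed n dir XD" unfolding upclosed_def
    proof (intro ballI allI impI)
      fix p a b assume p: "p \<in> XD" and ab: "is_path n dir a \<and> is_path n dir b \<and> composable n dir a p \<and> composable n dir p b"
      then obtain v where v: "v \<in> ?V" "v \<notin> C" "le_J n dir p v" "p \<in> X" unfolding XD_def by blast
      obtain v' where v': "v' \<in> ?V" "le_J n dir p v'" "le_J n dir (pconcat (pconcat a p) b) v'" "pconcat (pconcat a p) b \<in> X"
        using gen[OF v(4)] ab by blast
      have "v' \<notin> C"
      proof
        assume "v' \<in> C"
        have "v' = v \<or> (v', v) \<in> ?A" using adj2[OF v(4) v'(1) v(1) v'(2) v(3)] .
        thus False using Cstep \<open>v' \<in> C\<close> v(2) by metis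
      qed
      thus "pconcat (pconcat a p) b \<in> XD" using v' XD_def by blast
    qed
  qed
  have XCp: "XC \<subseteq> {p. is_path n dir p}" and XDp: "XD \<subseteq> {p. is_path n dir p}"
    using Xp unfolding XC_def XD_def by blast+
  define J where "J = (span_of n dir XC :: (qpath \<Rightarrow> 'k) set)"
  define K where "K = (span_of n dir XD :: (qpath \<Rightarrow> 'k) set)"
  have iJ: "is_ideal n dir J" unfolding J_def by (rule span_ideal[OF XCp XCup])
  have iK: "is_ideal n dir K" unfolding K_def by (rule span_ideal[OF XDp XDup])
  have w0C: "w0 \<in> C" using w0 unfolding C_def by blast
  have u0C: "u0 \<in> ?V - C" using u0 nr unfolding C_def by blast
  have w0p: "is_path n dir w0" and u0p: "is_path n dir u0" using w0 u0 V maximal_path_def by blast+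
  have "w0 \<in> XC" using w0C w0 V le_J_refl[OF w0p] unfolding XC_def by blast
  hence "path_elem w0 \<in> J" unfolding J_def using pe_in_span[OF w0p] by blast
  hence Jnz: "J \<noteq> {\<lambda>_. 0}" using path_elem_nz by (metis singletonD)
  have "u0 \<in> XD" using u0C V le_J_refl[OF u0p] unfolding XD_def by blast
  hence "path_elem u0 \<in> K" unfolding K_def using pe_in_span[OF u0p] by blast
  hence Knz: "K \<noteq> {\<lambda>_. 0}" using path_elem_nz by (metis singletonD)
  have JK: "J \<inter> K = {\<lambda>_. 0}"
  proof
    show "J \<inter> K \<subseteq> {\<lambda>_. 0}"
    proof
      fix f assume f: "f \<in> J \<inter> K"
      have "\<forall>r. f r = 0"
      proof (rule ccontr)
        assume "\<not> (\<forall>r. f r = 0)"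
        then obtain r where "f r \<noteq> 0" by blast
        hence "r \<in> XC" "r \<in> XD" using f unfolding J_def K_def span_of_def by blast+
        thus False using disj by blast
      qed
      thus "f \<in> {\<lambda>_. 0}" by auto
    qed
    show "{\<lambda>_. 0} \<subseteq> J \<inter> K" using iJ iK unfolding is_ideal_def by blast
  qed
  have split: "I = {(\<lambda>r. j r + k r) | j k. j \<in> J \<and> k \<in> K}"
  proof
    show "I \<subseteq> {(\<lambda>r. j r + k r) | j k. j \<in> J \<and> k \<in> K}"
    proof
      fix f assume f: "f \<in> I"
      hence fa: "f \<in> pathalg n dir" and fX: "\<And>p. f p \<noteq> 0 \<Longrightarrow> p \<in> X" using I unfolding span_of_def by blast+
      define j where "j = (\<lambda>r. if r \<in> XC then f r else 0)"
      define k where "k = (\<lambda>r. if r \<in> XC then 0 else f r)"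
      have "j \<in> J" using fa unfolding J_def span_of_def pathalg_def j_def by auto
      moreover have "k \<in> K"
        unfolding K_def span_of_def pathalg_def
      proof (intro CollectI conjI allI impI)
        fix p assume "k p \<noteq> 0"
        hence kp: "p \<notin> XC" "f p \<noteq> 0" unfolding k_def by (auto split: if_splits)
        thus "is_path n dir p" using fa unfolding pathalg_def by blast
        have "p \<in> X" using fX kp by blast
        then obtain v where "v \<in> ?V" "le_J n dir p v" using above by blast
        moreover hence "v \<notin> C" using kp \<open>p \<in> X\<close> unfolding XC_def by blast
        ultimately show "p \<in> XD" using \<open>p \<in> X\<close> unfolding XD_def by blast
      qed
      moreover have "f = (\<lambda>r. j r + k r)" unfolding j_def k_def by auto
      ultimately show "f \<in> {(\<lambda>r. j r + k r) | j k. j \<in> J \<and> k \<in> K}" by blast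
    qed
    show "{(\<lambda>r. j r + k r) | j k. j \<in> J \<and> k \<in> K} \<subseteq> I"
    proof
      fix f assume "f \<in> {(\<lambda>r. j r + k r) | j k. j \<in> J \<and> k \<in> K}"
      then obtain j k where jk: "j \<in> J" "k \<in> K" "f = (\<lambda>r. j r + k r)" by blast
      have j: "\<And>p. j p \<noteq> 0 \<Longrightarrow> is_path n dir p \<and> p \<in> X"
        using jk(1) unfolding J_def span_of_def pathalg_def XC_def by blast
      have k: "\<And>p. k p \<noteq> 0 \<Longrightarrow> is_path n dir p \<and> p \<in> X"
        using jk(2) unfolding K_def span_of_def pathalg_def XD_def by blast
      have "\<And>p. f p \<noteq> 0 \<Longrightarrow> is_path n dir p \<and> p \<in> X"
      proof -
        fix p assume "f p \<noteq> 0"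
        hence "j p \<noteq> 0 \<or> k p \<noteq> 0" using jk(3) by auto
        thus "is_path n dir p \<and> p \<in> X" using j k by blast
      qed
      thus "f \<in> I" unfolding I span_of_def pathalg_def by blast
    qed
  qed
  show ?thesis unfolding decomposable_ideal_def using iJ iK Jnz Knz JK split by blast
qed



lemma ideal_left: "is_ideal n dir J \<Longrightarrow> f \<in> J \<Longrightarrow> a \<in> pathalg n dir \<Longrightarrow> pmult n dir a f \<in> J"
  unfolding is_ideal_def by blast
lemma ideal_right: "is_ideal n dir J \<Longrightarrow> f \<in> J \<Longrightarrow> a \<in> pathalg n dir \<Longrightarrow> pmult n dir f a \<in> J"
  unfolding is_ideal_def by blast
lemma ideal_scal: "is_ideal n dir J \<Longrightarrow> f \<in> J \<Longrightarrow> (\<lambda>r. c * f r) \<in> J"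
  unfolding is_ideal_def by blast
lemma ideal_alg: "is_ideal n dir J \<Longrightarrow> f \<in> J \<Longrightarrow> f \<in> pathalg n dir"
  unfolding is_ideal_def by blast
lemma ideal_zero: "is_ideal n dir J \<Longrightarrow> (\<lambda>_. 0) \<in> J"
  unfolding is_ideal_def by blast

lemma edge_split:
  fixes I J K :: "(qpath \<Rightarrow> 'k::field) set"
  assumes adm: "admissible n dir" and iJ: "is_ideal n dir J" and iK: "is_ideal n dir K"
    and split: "I = {(\<lambda>r. j r + k r) | j k. j \<in> J \<and> k \<in> K}"
    and xI: "path_elem (x, []) \<in> I" and x: "x < n"
  shows "path_elem (x, []) \<in> J \<or> path_elem (x, []) \<in> K"
proof -
  obtain j k where jk: "j \<in> J" "k \<in> K" "path_elem (x, []) = (\<lambda>r. j r + k r)" using xI split by blast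
  have ja: "j \<in> pathalg n dir" and ka: "k \<in> pathalg n dir" using jk ideal_alg iJ iK by blast+
  have ea: "path_elem (x, []) \<in> pathalg n dir" using path_elem_alg trivial_path x by blast
  have cj: "(\<lambda>r. j (x, []) * path_elem (x, []) r) \<in> J"
    using corner[OF adm x, of j] ideal_right[OF iJ ideal_left[OF iJ jk(1) ea] ea] by simp
  have ck: "(\<lambda>r. k (x, []) * path_elem (x, []) r) \<in> K"
    using corner[OF adm x, of k] ideal_right[OF iK ideal_left[OF iK jk(2) ea] ea] by simp
  have "j (x, []) + k (x, []) = (path_elem (x, []) (x, []) :: 'k)" using jk(3) by metis
  hence s: "j (x, []) + k (x, []) = 1" by (simp add: path_elem_def)
  show ?thesis
  proof (cases "j (x, []) = 0")
    case True
    hence "k (x, []) = 1" using s by simp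
    hence "(\<lambda>r. k (x, []) * path_elem (x, []) r) = path_elem (x, [])" by simp
    thus ?thesis using ck by simp
  next
    case False
    have "(\<lambda>r. inverse (j (x, [])) * (j (x, []) * path_elem (x, []) r)) \<in> J" using ideal_scal[OF iJ cj] .
    moreover have "(\<lambda>r. inverse (j (x, [])) * (j (x, []) * path_elem (x, []) r)) = path_elem (x, [])"
      using False by (simp add: mult.assoc[symmetric])
    ultimately show ?thesis by simp
  qed
qed

lemma prop_vertex:
  fixes J :: "(qpath \<Rightarrow> 'k::field) set"
  assumes iJ: "is_ideal n dir J" and v: "is_path n dir v" and e: "is_endpoint n dir y v"
    and yJ: "path_elem (y, []) \<in> J"
  shows "path_elem v \<in> J"
proof -
  have va: "path_elem v \<in> pathalg n dir" using path_elem_alg v by blast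
  from e show ?thesis unfolding is_endpoint_def path_start_def
  proof
    assume "y = fst v"
    thus ?thesis using unit_left[OF v] ideal_right[OF iJ yJ va] by (metis (no_types))
  next
    assume "y = path_end n dir v"
    thus ?thesis using unit_right[OF v] ideal_left[OF iJ yJ va] by (metis (no_types))
  qed
qed



lemma kill_K:
  fixes I J K :: "(qpath \<Rightarrow> 'k::field) set"
  assumes adm: "admissible n dir" and Xp: "X \<subseteq> {p. is_path n dir p}" and up: "upclosed n dir X"
    and I: "I = span_of n dir X" and iJ: "is_ideal n dir J" and iK: "is_ideal n dir K"
    and JK: "J \<inter> K = {\<lambda>_. 0}" and KI: "K \<subseteq> I"
    and hE: "\<And>y. y \<in> gamma_edges n dir I \<Longrightarrow> path_elem (y, []) \<in> J \<or> path_elem (y, []) \<in> K"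
    and conn: "gamma_connected n dir I" and w0: "w0 \<in> gamma_vertices n dir I"
    and x: "x \<in> gamma_edges n dir I" and xw0: "is_endpoint n dir x w0" and xJ: "path_elem (x, []) \<in> J"
  shows "K \<subseteq> {\<lambda>_. 0}"
proof -
  let ?V = "gamma_vertices n dir I"
  let ?A = "gamma_adj n dir I"
  have V: "\<And>w. w \<in> ?V \<longleftrightarrow> maximal_path n dir w \<and> w \<in> X" using vert_iff I by blast
  have Vp: "\<And>w. w \<in> ?V \<Longrightarrow> is_path n dir w" using V maximal_path_def by blast
  have notboth: "\<And>f. f \<in> J \<Longrightarrow> f \<in> K \<Longrightarrow> f = (\<lambda>_. 0)" using JK by blast
  have excl: "path_elem (y, []) \<in> J" if "v \<in> ?V" "y \<in> gamma_edges n dir I" "is_endpoint n dir y v" "path_elem v \<in> J" for v y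
  proof (rule ccontr)
    assume "path_elem (y, []) \<notin> J"
    hence "path_elem (y, []) \<in> K" using hE that(2) by blast
    hence "path_elem v \<in> K" using prop_vertex[OF iK Vp[OF that(1)] that(3)] by blast
    thus False using notboth that(4) path_elem_nz by blast
  qed
  have allJ: "path_elem v \<in> J" if "(w0, v) \<in> ?A\<^sup>*" for v
    using that
  proof (induction rule: rtrancl_induct)
    case base
    then show ?case using prop_vertex[OF iJ Vp[OF w0] xw0 xJ] .
  next
    case (step u v)
    then obtain y where y: "u \<in> ?V" "v \<in> ?V" "y \<in> gamma_edges n dir I" "is_endpoint n dir y u" "is_endpoint n dir y v"
      unfolding gamma_adj_def by blast
    hence "path_elem (y, []) \<in> J" using excl step.IH by blast
    thus ?case using prop_vertex[OF iJ Vp[OF y(2)] y(5)] by blast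
  qed
  have edgeJ: "\<exists>y. y \<in> gamma_edges n dir I \<and> is_endpoint n dir y v \<and> path_elem (y, []) \<in> J" if "v \<in> ?V" for v
  proof (cases "v = w0")
    case True
    thus ?thesis using x xw0 xJ by blast
  next
    case False
    have "(w0, v) \<in> ?A\<^sup>*" using conn w0 that unfolding gamma_connected_def by blast
    then obtain u where "(u, v) \<in> ?A" using False by (metis rtranclE)
    then obtain y where y: "y \<in> gamma_edges n dir I" "is_endpoint n dir y v"
      unfolding gamma_adj_def by blast
    have "path_elem v \<in> J" using allJ \<open>(w0, v) \<in> ?A\<^sup>*\<close> by blast
    hence "path_elem (y, []) \<in> J" using excl that y by blast
    thus ?thesis using y by blast
  qed
  show ?thesis
  proof
    fix k assume kK: "k \<in> K"
    show "k \<in> {\<lambda>_. 0}"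
    proof (rule ccontr)
      assume "k \<notin> {\<lambda>_. 0}"
      then obtain p where kp: "k p \<noteq> 0" by (metis (full_types) singletonI ext)
      have ka: "k \<in> pathalg n dir" using ideal_alg[OF iK kK] .
      have "p \<in> X" using kK KI kp I unfolding span_of_def by blast
      hence pp: "is_path n dir p" using Xp by blast
      obtain v where mv: "maximal_path n dir v" "le_J n dir p v" using max_above[OF adm pp] by blast
      have "v \<in> X" using upclosed_le[OF up \<open>p \<in> X\<close> mv(2)] .
      hence vV: "v \<in> ?V" using V mv by blast
      obtain a b where ab: "is_path n dir a" "is_path n dir b" "composable n dir a p" "composable n dir p b"
        "v = pconcat (pconcat a p) b" using mv(2) unfolding le_J_def by blast
      obtain y where y: "y \<in> gamma_edges n dir I" "is_endpoint n dir y v" "path_elem (y, []) \<in> J"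
        using edgeJ[OF vV] by blast
      have yn: "y < n" using y(1) unfolding gamma_edges_def is_source_def is_sink_def by blast
      have ya: "path_elem (y, []) \<in> pathalg n dir" using path_elem_alg trivial_path[OF yn] by blast
      have aa: "path_elem a \<in> pathalg n dir" and ba: "path_elem b \<in> pathalg n dir"
        using path_elem_alg ab by blast+
      from y(2) show False unfolding is_endpoint_def path_start_def
      proof
        assume yv: "y = fst v"
        define g where "g = pmult n dir (path_elem a) k"
        have gK: "g \<in> K" unfolding g_def using ideal_left[OF iK kK aa] .
        define h where "h = pmult n dir (path_elem (y, [])) g"
        have "h \<in> K" unfolding h_def using ideal_left[OF iK gK ya] .
        moreover have "h \<in> J" unfolding h_def using ideal_right[OF iJ y(3) ideal_alg[OF iK gK]] .
        ultimately have h0: "h = (\<lambda>_. 0)" using notboth by blast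
        have ap: "is_path n dir (pconcat a p)" using path_concat[OF ab(1) pp ab(3)] .
        have cy: "composable n dir (y, []) (pconcat a p)"
          using yv ab(5) by (simp add: composable_def path_end_def path_start_def pconcat_def)
        have "h (pconcat (y, []) (pconcat a p)) = g (pconcat a p)"
          unfolding h_def using pmult_left[OF trivial_path[OF yn] ap cy] .
        also have "\<dots> = k p" unfolding g_def using pmult_left[OF ab(1) pp ab(3)] .
        finally show False using h0 kp by simp
      next
        assume yv: "y = path_end n dir v"
        define g where "g = pmult n dir k (path_elem b)"
        have gK: "g \<in> K" unfolding g_def using ideal_right[OF iK kK ba] .
        define h where "h = pmult n dir g (path_elem (y, []))"
        have "h \<in> K" unfolding h_def using ideal_right[OF iK gK ya] .
        moreover have "h \<in> J" unfolding h_def using ideal_left[OF iJ y(3) ideal_alg[OF iK gK]] .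
        ultimately have h0: "h = (\<lambda>_. 0)" using notboth by blast
        have bp: "is_path n dir (pconcat p b)" using path_concat[OF pp ab(2) ab(4)] .
        have "path_end n dir v = path_end n dir b"
          using ab(5) end_concat comp_concat_right ab(3,4) by metis
        hence cy: "composable n dir (pconcat p b) (y, [])"
          using yv ab(4) end_concat by (simp add: composable_def path_start_def)
        have "h (pconcat (pconcat p b) (y, [])) = g (pconcat p b)"
          unfolding h_def using pmult_right[OF bp trivial_path[OF yn] cy] .
        also have "\<dots> = k p" unfolding g_def using pmult_right[OF pp ab(2) ab(4)] .
        finally show False using h0 kp by simp
      qed
    qed
  qed
qed



lemma single_vertex:
  fixes I J :: "(qpath \<Rightarrow> 'k::field) set"
  assumes adm: "admissible n dir" and Xp: "X \<subseteq> {p. is_path n dir p}" and up: "upclosed n dir X"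
    and I: "I = span_of n dir X" and iJ: "is_ideal n dir J" and JI: "J \<subseteq> I" and nzJ: "J \<noteq> {\<lambda>_. 0}"
    and Vw: "gamma_vertices n dir I = {w}"
  shows "path_elem w \<in> J"
proof -
  have V: "\<And>w. w \<in> gamma_vertices n dir I \<longleftrightarrow> maximal_path n dir w \<and> w \<in> X" using vert_iff I by blast
  have toW: "le_J n dir q w" if "q \<in> X" for q
  proof -
    have "is_path n dir q" using Xp that by blast
    then obtain v where "maximal_path n dir v" "le_J n dir q v" using max_above[OF adm] by blast
    moreover hence "v \<in> X" using upclosed_le[OF up that] by blast
    ultimately have "v \<in> gamma_vertices n dir I" using V by blast
    hence "v = w" using Vw by blast
    thus ?thesis using \<open>le_J n dir q v\<close> by simp
  qed
  obtain j where jJ: "j \<in> J" and jnz: "j \<noteq> (\<lambda>_. 0)" using nzJ ideal_zero[OF iJ] by blast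
  then obtain p where jp: "j p \<noteq> 0" by (metis ext)
  have "p \<in> X" using jJ JI jp I unfolding span_of_def by blast
  hence pp: "is_path n dir p" using Xp by blast
  obtain a b where ab: "is_path n dir a" "is_path n dir b" "composable n dir a p" "composable n dir p b"
        "w = pconcat (pconcat a p) b" using toW[OF \<open>p \<in> X\<close>] unfolding le_J_def by blast
  have wp: "is_path n dir w" using V Vw maximal_path_def by blast
  have aa: "path_elem a \<in> pathalg n dir" and ba: "path_elem b \<in> pathalg n dir"
    using path_elem_alg ab by blast+
  define g where "g = pmult n dir (pmult n dir (path_elem a) j) (path_elem b)"
  have gJ: "g \<in> J" unfolding g_def using ideal_right[OF iJ ideal_left[OF iJ jJ aa] ba] .
  have ap: "is_path n dir (pconcat a p)" using path_concat[OF ab(1) pp ab(3)] .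
  have cab: "composable n dir (pconcat a p) b" using comp_concat_right ab by blast
  have gw: "g w = j p"
    unfolding g_def ab(5) using pmult_right[OF ap ab(2) cab, where f="pmult n dir (path_elem a) j"] pmult_left[OF ab(1) pp ab(3), where f=j] by simp
  have gsupp: "r = w" if gr: "g r \<noteq> 0" for r
  proof -
    have "r \<in> X" using gr gJ JI I unfolding span_of_def by blast
    hence rp: "is_path n dir r" using Xp by blast
    obtain p1 q1 where 1: "is_path n dir p1" "composable n dir p1 q1" "pconcat p1 q1 = r"
        "pmult n dir (path_elem a) j p1 \<noteq> 0" "(path_elem b q1 :: 'k) \<noteq> 0"
      using pmult_nz[OF gr[unfolded g_def]] by blast
    have q1: "q1 = b" using 1(5) by (simp add: path_elem_def split: if_splits)
    obtain p2 q2 where 2: "is_path n dir q2" "composable n dir p2 q2" "pconcat p2 q2 = p1"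
        "(path_elem a p2 :: 'k) \<noteq> 0"
      using pmult_nz[OF 1(4)] by blast
    have p2: "p2 = a" using 2(4) by (simp add: path_elem_def split: if_splits)
    have "fst r = fst p1" using 1(3) by (auto simp: pconcat_def)
    moreover have "fst p1 = fst a" using 2(3) p2 by (auto simp: pconcat_def)
    ultimately have fr: "fst r = fst w" using ab(5) by (simp add: pconcat_def)
    have er: "path_end n dir r = path_end n dir w"
    proof -
      have "path_end n dir r = path_end n dir b" using 1(2,3) q1 end_concat by metis
      moreover have "path_end n dir w = path_end n dir b" using ab(5) end_concat cab by metis
      ultimately show ?thesis by simp
    qed
    obtain a' b' where ab': "is_path n dir a'" "is_path n dir b'" "composable n dir a' r" "composable n dir r b'"
        "w = pconcat (pconcat a' r) b'" using toW[OF \<open>r \<in> X\<close>] unfolding le_J_def by blast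
    have "fst a' = fst w" using ab'(5) by (simp add: pconcat_def)
    hence "snd a' = []" using no_cycle[OF adm ab'(1)] ab'(3) fr by (simp add: composable_def path_start_def)
    have "path_end n dir w = path_end n dir b'"
      using ab'(5) end_concat comp_concat_right ab'(3,4) by metis
    hence "snd b' = []" using no_cycle[OF adm ab'(2)] ab'(4) er by (simp add: composable_def path_start_def)
    have "le_J n dir r w" using toW[OF \<open>r \<in> X\<close>] .
    moreover have "length (snd w) \<le> length (snd r)" using ab'(5) \<open>snd a' = []\<close> \<open>snd b' = []\<close>
      by (simp add: pconcat_def)
    ultimately show "r = w" using le_J_eq_len by metis
  qed
  have "g = (\<lambda>r. j p * path_elem w r)"
  proof
    fix r show "g r = j p * path_elem w r"
    proof (cases "r = w")
      case True thus ?thesis using gw by (simp add: path_elem_def)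
    next
      case False
      hence "g r = 0" using gsupp by blast
      thus ?thesis using False by (simp add: path_elem_def)
    qed
  qed
  hence "(\<lambda>r. inverse (j p) * (j p * path_elem w r)) \<in> J" using ideal_scal[OF iJ gJ] by simp
  moreover have "(\<lambda>r. inverse (j p) * (j p * path_elem w r)) = path_elem w"
    using jp by (simp add: mult.assoc[symmetric])
  ultimately show ?thesis by simp
qed

theorem theorem9:
  fixes n :: nat and dir :: "nat \<Rightarrow> bool" and I :: "(qpath \<Rightarrow> 'k::alg_closed_field) set"
  assumes "admissible n dir"
    and "lin_semigroup_ideal n dir I"
    and "I \<noteq> {\<lambda>_. 0}"
  shows "indecomposable_ideal n dir I \<longleftrightarrow> gamma_connected n dir I"
proof -
  note adm = assms(1)
  obtain X where Xp: "X \<subseteq> {p. is_path n dir p}" and up: "upclosed n dir X" and I: "I = span_of n dir X"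
    using assms(2) unfolding lin_semigroup_ideal_def upclosed_def span_of_def by blast
  show ?thesis
  proof
    assume "indecomposable_ideal n dir I"
    thus "gamma_connected n dir I" using decomp[OF adm Xp up I assms(3)] unfolding indecomposable_ideal_def by blast
  next
    assume conn: "gamma_connected n dir I"
    show "indecomposable_ideal n dir I" unfolding indecomposable_ideal_def
    proof (intro conjI)
      show "I \<noteq> {\<lambda>_. 0}" by (rule assms(3))
    next
      show "\<not> decomposable_ideal n dir I"
      proof
      assume "decomposable_ideal n dir I"
      then obtain J K where iJ: "is_ideal n dir J" and iK: "is_ideal n dir K" and Jnz: "J \<noteq> {\<lambda>_. 0}"
        and Knz: "K \<noteq> {\<lambda>_. 0}" and JK: "J \<inter> K = {\<lambda>_. 0}" and split: "I = {(\<lambda>r. j r + k r) | j k. j \<in> J \<and> k \<in> K}"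
        unfolding decomposable_ideal_def by blast
      have JI: "J \<subseteq> I"
      proof
        fix j assume "j \<in> J"
        hence "\<exists>j' k'. j = (\<lambda>r. j' r + k' r) \<and> j' \<in> J \<and> k' \<in> K"
          by (intro exI[of _ j] exI[of _ "\<lambda>_. 0"]) (simp add: ideal_zero[OF iK])
        thus "j \<in> I" using split by blast
      qed
      have KI: "K \<subseteq> I"
      proof
        fix k assume "k \<in> K"
        hence "\<exists>j' k'. k = (\<lambda>r. j' r + k' r) \<and> j' \<in> J \<and> k' \<in> K"
          by (intro exI[of _ "\<lambda>_. 0"] exI[of _ k]) (simp add: ideal_zero[OF iJ])
        thus "k \<in> I" using split by blast
      qed
      have KJ: "K \<inter> J = {\<lambda>_. 0}" using JK by blast
      have hE: "\<And>y. y \<in> gamma_edges n dir I \<Longrightarrow> path_elem (y, []) \<in> J \<or> path_elem (y, []) \<in> K"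
      proof -
        fix y assume y: "y \<in> gamma_edges n dir I"
        hence yn: "y < n" unfolding gamma_edges_def is_source_def is_sink_def by blast
        have "path_elem (y, []) \<in> I" using y unfolding gamma_edges_def by blast
        thus "path_elem (y, []) \<in> J \<or> path_elem (y, []) \<in> K" using edge_split[OF adm iJ iK split _ yn] by blast
      qed
      have hE': "\<And>y. y \<in> gamma_edges n dir I \<Longrightarrow> path_elem (y, []) \<in> K \<or> path_elem (y, []) \<in> J"
        using hE by blast
      show False
      proof (cases "\<exists>w0 x. w0 \<in> gamma_vertices n dir I \<and> x \<in> gamma_edges n dir I \<and> is_endpoint n dir x w0")
        case True
        then obtain w0 x where w0: "w0 \<in> gamma_vertices n dir I" and x: "x \<in> gamma_edges n dir I"
          and xw: "is_endpoint n dir x w0" by blast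
        from hE[OF x] show False
        proof
          assume "path_elem (x, []) \<in> J"
          hence "K \<subseteq> {\<lambda>_. 0}" using kill_K[OF adm Xp up I iJ iK JK KI hE conn w0 x xw] by blast
          thus False using Knz ideal_zero[OF iK] by blast
        next
          assume "path_elem (x, []) \<in> K"
          hence "J \<subseteq> {\<lambda>_. 0}" using kill_K[OF adm Xp up I iK iJ KJ JI hE' conn w0 x xw] by blast
          thus False using Jnz ideal_zero[OF iJ] by blast
        qed
      next
        case False
        hence "gamma_adj n dir I = {}" unfolding gamma_adj_def by blast
        moreover obtain w where w: "w \<in> gamma_vertices n dir I" using conn unfolding gamma_connected_def by blast
        ultimately have "gamma_vertices n dir I = {w}" using conn unfolding gamma_connected_def by auto
        hence "path_elem w \<in> J" "path_elem w \<in> K"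
          using single_vertex[OF adm Xp up I iJ JI Jnz] single_vertex[OF adm Xp up I iK KI Knz] by blast+
        thus False using JK path_elem_nz by blast
      qed
      qed
    qed
  qed
qed


end
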